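(* Let $\rho_{AB}$ be a two-qubit density operator and $\Phi_{AB}=|\Phi\rangle\langle\Phi|$ a pure maximally entangled two-qubit state. If $\langle\Phi|\rho_{AB}|\Phi\rangle\ge c$ for some $c\in[\frac12,1]$, then the spectrum of the reduced state $\rho_A=\operatorname{tr}_B\rho_{AB}$ is contained in $\big[\frac{1-\eta}{2},\frac{1+\eta}{2}\big]$, where $\eta:=2\sqrt{c(1-c)}$. *)

theory Defs
  imports Complex_Main "Jordan_Normal_Form.Matrix" "Jordan_Normal_Form.Char_Poly"
begin

text \<open>Two-qubit Hilbert space C^2 (x) C^2 is identified with C^4, the basis vector
  |a>|b> (a, b in {0,1}) having index 2*a + b.\<close>

definition hermitian_mat :: "complex mat \<Rightarrow> bool" where
  "hermitian_mat A \<longleftrightarrow> (\<forall>i<dim_row A. \<forall>j<dim_row A. A $$ (i,j) = cnj (A $$ (j,i)))"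

definition psd_mat :: "complex mat \<Rightarrow> bool" where
  "psd_mat A \<longleftrightarrow> (\<forall>v \<in> carrier_vec (dim_row A).
      Im (conjugate v \<bullet> (A *\<^sub>v v)) = 0 \<and> Re (conjugate v \<bullet> (A *\<^sub>v v)) \<ge> 0)"

definition mat_trace :: "complex mat \<Rightarrow> complex" where
  "mat_trace A = (\<Sum>i<dim_row A. A $$ (i,i))"

definition density_operator :: "nat \<Rightarrow> complex mat \<Rightarrow> bool" where
  "density_operator n \<rho> \<longleftrightarrow> \<rho> \<in> carrier_mat n n \<and> hermitian_mat \<rho> \<and> psd_mat \<rho> \<and> mat_trace \<rho> = 1"

definition ptrace_B :: "complex mat \<Rightarrow> complex mat" where
  "ptrace_B \<rho> = mat 2 2 (\<lambda>(a, a'). \<Sum>b<2. \<rho> $$ (2*a + b, 2*a' + b))"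

definition tensor_vec2 :: "complex vec \<Rightarrow> complex vec \<Rightarrow> complex vec" where
  "tensor_vec2 u w = vec 4 (\<lambda>i. u $ (i div 2) * w $ (i mod 2))"

definition orthonormal_basis2 :: "complex vec \<Rightarrow> complex vec \<Rightarrow> bool" where
  "orthonormal_basis2 e0 e1 \<longleftrightarrow> e0 \<in> carrier_vec 2 \<and> e1 \<in> carrier_vec 2 \<and>
     e0 \<bullet>c e0 = 1 \<and> e1 \<bullet>c e1 = 1 \<and> e0 \<bullet>c e1 = 0"

definition max_entangled2 :: "complex vec \<Rightarrow> bool" where
  "max_entangled2 \<Phi> \<longleftrightarrow> (\<exists>e0 e1 f0 f1. orthonormal_basis2 e0 e1 \<and> orthonormal_basis2 f0 f1 \<and>
     \<Phi> = complex_of_real (1 / sqrt 2) \<cdot>\<^sub>v (tensor_vec2 e0 f0 + tensor_vec2 e1 f1))"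

definition expect :: "complex vec \<Rightarrow> complex mat \<Rightarrow> complex" where
  "expect \<Phi> \<rho> = conjugate \<Phi> \<bullet> (\<rho> *\<^sub>v \<Phi>)"

end

theory Submission
  imports Defs
begin


definition B :: "complex mat \<Rightarrow> (nat\<Rightarrow>complex) \<Rightarrow> (nat\<Rightarrow>complex) \<Rightarrow> complex" where
 "B R x y = (\<Sum>i<4. \<Sum>j<4. cnj (x i) * R$$(i,j) * y j)"

lemma sum4: "(\<Sum>i<(4::nat). f i) = f 0 + f 1 + f 2 + f 3"
  by (simp add: numeral_eq_Suc lessThan_Suc ac_simps)
lemma sum4': "(\<Sum>i\<in>{0..<(4::nat)}. f i) = f 0 + f 1 + f 2 + f 3"
  by (simp add: numeral_eq_Suc atLeast0LessThan lessThan_Suc ac_simps)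
lemma sum2: "(\<Sum>i<(2::nat). f i) = f 0 + f 1"
  by (simp add: numeral_eq_Suc lessThan_Suc ac_simps)

lemma B_psd:
  assumes "psd_mat R" "R \<in> carrier_mat 4 4"
  shows "Im (B R x x) = 0" "Re (B R x x) \<ge> 0"
proof -
  let ?v = "vec 4 x"
  have "conjugate ?v \<bullet> (R *\<^sub>v ?v) = B R x x"
    using assms(2) unfolding B_def scalar_prod_def
    by (simp add: sum_distrib_left mult.assoc row_def scalar_prod_def atLeast0LessThan)
  moreover have "?v \<in> carrier_vec (dim_row R)" using assms(2) by auto
  ultimately show "Im (B R x x) = 0" "Re (B R x x) \<ge> 0" using assms(1) unfolding psd_mat_def by metis+
qed

lemma B_herm:
  assumes "hermitian_mat R" "R \<in> carrier_mat 4 4"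
  shows "B R y x = cnj (B R x y)"
proof -
  have dr: "dim_row R = 4" using assms(2) by simp
  have h: "\<And>i j. i<4 \<Longrightarrow> j<4 \<Longrightarrow> R$$(i,j) = cnj (R$$(j,i))"
    using assms(1) unfolding hermitian_mat_def dr by blast
  have "B R y x = (\<Sum>j<4. \<Sum>i<4. cnj (y i) * R$$(i,j) * x j)" unfolding B_def by (rule sum.swap)
  also have "\<dots> = (\<Sum>j<4. \<Sum>i<4. cnj (cnj (x j) * R$$(j,i) * y i))"
  proof (intro sum.cong refl)
    fix j i assume "j \<in> {..<4::nat}" "i \<in> {..<4::nat}"
    then have "i<4" "j<4" by auto
    then have "R$$(i,j) = cnj (R$$(j,i))" by (rule h)
    then show "cnj (y i) * R$$(i,j) * x j = cnj (cnj (x j) * R$$(j,i) * y i)" by simp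
  qed
  also have "\<dots> = cnj (B R x y)" unfolding B_def cnj_sum ..
  finally show ?thesis .
qed

lemma B_lin:
  "B R (\<lambda>i. a * x i + b * y i) (\<lambda>i. a * x i + b * y i) =
    cnj a * a * B R x x + cnj a * b * B R x y + cnj b * a * B R y x + cnj b * b * B R y y"
  unfolding B_def
  by (simp add: algebra_simps sum.distrib sum_distrib_left)

lemma re_real: "Im z = 0 \<Longrightarrow> z = complex_of_real (Re z)"
  by (simp add: complex_eq_iff)

lemma B_CS_aux:
  assumes psd: "psd_mat R" and h: "hermitian_mat R" and c: "R \<in> carrier_mat 4 4"
    and bpos: "Re (B R y y) > 0"
  shows "cmod (B R x y)^2 \<le> Re (B R x x) * Re (B R y y)"
proof -
  define \<alpha> where "\<alpha> = Re (B R x x)"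
  define \<beta> where "\<beta> = Re (B R y y)"
  define \<gamma> where "\<gamma> = B R x y"
  have xx: "B R x x = of_real \<alpha>" unfolding \<alpha>_def by (rule re_real, rule B_psd[OF psd c])
  have yy: "B R y y = of_real \<beta>" unfolding \<beta>_def by (rule re_real, rule B_psd[OF psd c])
  have yx: "B R y x = cnj \<gamma>" unfolding \<gamma>_def by (rule B_herm[OF h c])
  have g: "\<gamma> * cnj \<gamma> = of_real (cmod \<gamma> ^2)" by (metis complex_norm_square of_real_power)
  let ?v = "\<lambda>i. of_real \<beta> * x i + (- cnj \<gamma>) * y i"
  have "B R ?v ?v = of_real (\<beta>^2 * \<alpha> - \<beta> * cmod \<gamma>^2)"
    unfolding B_lin xx yy yx \<gamma>_def[symmetric]
    using g by (simp add: algebra_simps power2_eq_square)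
  moreover have "Re (B R ?v ?v) \<ge> 0" by (rule B_psd[OF psd c])
  ultimately have "\<beta>^2 * \<alpha> - \<beta> * cmod \<gamma>^2 \<ge> 0" by (metis Re_complex_of_real)
  then have "\<beta> * (\<beta> * \<alpha> - cmod \<gamma>^2) \<ge> 0" by (simp add: algebra_simps power2_eq_square)
  with bpos have "\<beta> * \<alpha> - cmod \<gamma>^2 \<ge> 0" unfolding \<beta>_def
    by (auto simp: zero_le_mult_iff)
  then show ?thesis unfolding \<alpha>_def \<beta>_def \<gamma>_def by (simp add: algebra_simps)
qed

lemma B_CS:
  assumes psd: "psd_mat R" and h: "hermitian_mat R" and c: "R \<in> carrier_mat 4 4"
  shows "cmod (B R x y)^2 \<le> Re (B R x x) * Re (B R y y)"
proof -
  have a0: "Re (B R x x) \<ge> 0" "Re (B R y y) \<ge> 0" using B_psd[OF psd c] by auto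
  show ?thesis
  proof (cases "Re (B R y y) > 0")
    case True then show ?thesis using B_CS_aux[OF assms] by blast
  next
    case F: False
    show ?thesis
    proof (cases "Re (B R x x) > 0")
      case True
      have "cmod (B R y x)^2 \<le> Re (B R y y) * Re (B R x x)" using B_CS_aux[OF assms True] .
      then show ?thesis using B_herm[OF h c, of x y] by (simp add: mult.commute)
    next
      case False
      with F a0 have z: "Re (B R x x) = 0" "Re (B R y y) = 0" by auto
      define \<gamma> where "\<gamma> = B R x y"
      have xx: "B R x x = 0" using z re_real B_psd[OF psd c] by (metis of_real_0)
      have yy: "B R y y = 0" using z re_real B_psd[OF psd c] by (metis of_real_0)
      have yx: "B R y x = cnj \<gamma>" unfolding \<gamma>_def by (rule B_herm[OF h c])
      have g: "\<gamma> * cnj \<gamma> = of_real (cmod \<gamma> ^2)" by (metis complex_norm_square of_real_power)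
      let ?v = "\<lambda>i. 1 * x i + (- cnj \<gamma>) * y i"
      have "B R ?v ?v = of_real (- 2 * cmod \<gamma>^2)"
        unfolding B_lin xx yy yx \<gamma>_def[symmetric]
        using g by (simp add: algebra_simps)
      moreover have "Re (B R ?v ?v) \<ge> 0" by (rule B_psd[OF psd c])
      ultimately have "cmod \<gamma> ^2 \<le> 0" by simp
      then show ?thesis using z unfolding \<gamma>_def by simp
    qed
  qed
qed


lemma rows:
  fixes a b c d :: complex
  assumes h1: "a*cnj a + b*cnj b = 1" and h2: "c*cnj c + d*cnj d = 1" and h3: "a*cnj c + b*cnj d = 0"
  shows "a*cnj a + c*cnj c = 1" "b*cnj b + d*cnj d = 1" "a*cnj b + c*cnj d = 0"
proof -
  have h3': "cnj a*c + cnj b*d = 0" using arg_cong[OF h3, of cnj] by (simp add: mult.commute)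
  have n3: "a*cnj c = -(b*cnj d)" using h3 by (simp add: eq_neg_iff_add_eq_0)
  have n3': "cnj a*c = -(cnj b*d)" using h3' by (simp add: eq_neg_iff_add_eq_0)
  have n3b: "b*cnj d = -(a*cnj c)" using h3 by (simp add: eq_neg_iff_add_eq_0 add.commute)
  have n3b': "cnj b*d = -(cnj a*c)" using h3' by (simp add: eq_neg_iff_add_eq_0 add.commute)
  have P: "(a*cnj a)*(c*cnj c) = (b*cnj b)*(d*cnj d)"
  proof -
    have "(a*cnj a)*(c*cnj c) = (a*cnj c)*(cnj a*c)" by (simp add: ac_simps)
    also have "\<dots> = (-(b*cnj d))*(-(cnj b*d))" by (simp only: n3 n3')
    also have "\<dots> = (b*cnj b)*(d*cnj d)" by (simp add: ac_simps)
    finally show ?thesis .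
  qed
  have bb: "b*cnj b = 1 - a*cnj a" and dd: "d*cnj d = 1 - c*cnj c" using h1 h2 by (simp_all add: algebra_simps)
  show r1: "a*cnj a + c*cnj c = 1" using P unfolding bb dd by (simp add: algebra_simps)
  have "b*cnj b + d*cnj d = 2 - (a*cnj a + c*cnj c)" unfolding bb dd by (simp add: algebra_simps)
  then show r2: "b*cnj b + d*cnj d = 1" using r1 by simp
  define T where "T = a*cnj b + c*cnj d"
  have Tb: "T*b = a*(1 - (a*cnj a + c*cnj c))"
  proof -
    have "T*b = a*(b*cnj b) + c*(b*cnj d)" unfolding T_def by (simp add: algebra_simps)
    also have "\<dots> = a*(1 - a*cnj a) + c*(-(a*cnj c))" by (simp only: bb n3b)
    finally show ?thesis by (simp add: algebra_simps)
  qed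
  have Td: "T*d = c*(1 - (a*cnj a + c*cnj c))"
  proof -
    have "T*d = a*(cnj b*d) + c*(d*cnj d)" unfolding T_def by (simp add: algebra_simps)
    also have "\<dots> = a*(-(cnj a*c)) + c*(1 - c*cnj c)" by (simp only: dd n3b')
    finally show ?thesis by (simp add: algebra_simps)
  qed
  have "(T*b)*cnj b + (T*d)*cnj d = T*(b*cnj b + d*cnj d)" by (simp add: algebra_simps)
  then have "T = (T*b)*cnj b + (T*d)*cnj d" using r2 by simp
  also have "\<dots> = 0" unfolding Tb Td r1 by simp
  finally show "a*cnj b + c*cnj d = 0" unfolding T_def .
qed

lemma ent:
  fixes a b c d p q r s z0 z1 :: complex and k :: real
  assumes h1: "a*cnj a + b*cnj b = 1" and h2: "c*cnj c + d*cnj d = 1" and h3: "a*cnj c + b*cnj d = 0"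
  and g1: "p*cnj p + q*cnj q = 1" and g2: "r*cnj r + s*cnj s = 1" and g3: "p*cnj r + q*cnj s = 0"
  and z: "z0*cnj z0 + z1*cnj z1 = 1" and k: "k^2 = 1/2"
  shows "(cnj z0 * (k*(a*p+c*r)) + cnj z1 * (k*(b*p+d*r))) * cnj (cnj z0 * (k*(a*p+c*r)) + cnj z1 * (k*(b*p+d*r)))
       + (cnj z0 * (k*(a*q+c*s)) + cnj z1 * (k*(b*q+d*s))) * cnj (cnj z0 * (k*(a*q+c*s)) + cnj z1 * (k*(b*q+d*s))) = 1/2"
proof -
  note R = rows[OF h1 h2 h3]
  have g3': "cnj p*r + cnj q*s = 0" using arg_cong[OF g3, of cnj] by (simp add: mult.commute)
  have R3': "cnj a*b + cnj c*d = 0" using arg_cong[OF R(3), of cnj] by (simp add: mult.commute)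
  define s0 where "s0 = cnj z0 * a + cnj z1 * b"
  define s1 where "s1 = cnj z0 * c + cnj z1 * d"
  have ss: "s0 * cnj s0 + s1 * cnj s1 = 1" 
  proof -
    have "s0 * cnj s0 + s1 * cnj s1 = cnj z0 * z0 * (a*cnj a + c*cnj c) + cnj z1 * z1 * (b*cnj b + d*cnj d)
       + cnj z0 * z1 * (a*cnj b + c*cnj d) + cnj z1 * z0 * (cnj a*b + cnj c*d)"
      unfolding s0_def s1_def by (simp add: algebra_simps)
    also have "\<dots> = z0 * cnj z0 + z1 * cnj z1" using R R3' by (simp add: ac_simps)
    finally show ?thesis using z by simp
  qed
  have kk: "complex_of_real k * complex_of_real k = 1/2" using k
    by (metis of_real_divide of_real_mult of_real_numeral of_real_1 power2_eq_square)
  have "(cnj z0 * (k*(a*p+c*r)) + cnj z1 * (k*(b*p+d*r))) = k * (s0*p + s1*r)" unfolding s0_def s1_def by (simp add: algebra_simps)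
  moreover have "(cnj z0 * (k*(a*q+c*s)) + cnj z1 * (k*(b*q+d*s))) = k * (s0*q + s1*s)" unfolding s0_def s1_def by (simp add: algebra_simps)
  moreover have "(k * (s0*p + s1*r)) * cnj (k * (s0*p + s1*r)) + (k * (s0*q + s1*s)) * cnj (k * (s0*q + s1*s)) = 1/2"
  proof -
    have "(k * (s0*p + s1*r)) * cnj (k * (s0*p + s1*r)) + (k * (s0*q + s1*s)) * cnj (k * (s0*q + s1*s))
      = (complex_of_real k * complex_of_real k) * (s0*cnj s0*(p*cnj p + q*cnj q) + s1*cnj s1*(r*cnj r + s*cnj s)
        + s0*cnj s1*(p*cnj r + q*cnj s) + s1*cnj s0*(cnj p*r + cnj q*s))"
      by (simp add: algebra_simps)
    also have "\<dots> = 1/2" unfolding kk g1 g2 g3 g3' using ss by simp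
    finally show ?thesis .
  qed
  ultimately show ?thesis by simp
qed


lemma real_2x2:
  fixes m0 m1 X Y G :: real
  assumes "m0 \<ge> 0" "m1 \<ge> 0" "X \<ge> 0" "Y \<ge> 0" "G \<ge> 0" "G^2 \<le> m0*m1"
  shows "m0*X^2 + m1*Y^2 + 2*(X*Y*G) \<le> (m0+m1)*(X^2+Y^2)"
proof -
  have "G \<le> sqrt m0 * sqrt m1"
    using assms by (metis real_le_rsqrt real_sqrt_mult)
  then have "X*Y*G \<le> X*Y*(sqrt m0 * sqrt m1)" using assms by (simp add: mult_left_mono)
  moreover have "2*(X*Y*(sqrt m0 * sqrt m1)) \<le> m0*Y^2 + m1*X^2"
  proof -
    have "0 \<le> (Y*sqrt m0 - X*sqrt m1)^2" by simp
    also have "\<dots> = m0*Y^2 + m1*X^2 - 2*(X*Y*(sqrt m0 * sqrt m1))"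
      using assms by (simp add: power2_eq_square algebra_simps)
    finally show ?thesis by simp
  qed
  ultimately show ?thesis by (simp add: algebra_simps)
qed

lemma re_aux: "Re (of_real A + (z + cnj z)) = A + 2*Re z" by simp

lemma B_2x2:
  assumes psd: "psd_mat R" and h: "hermitian_mat R" and c: "R \<in> carrier_mat 4 4"
  shows "Re (B R (\<lambda>i. w0 * p i + w1 * q i) (\<lambda>i. w0 * p i + w1 * q i))
     \<le> (Re (B R p p) + Re (B R q q)) * (cmod w0^2 + cmod w1^2)"
proof -
  define m0 where "m0 = Re (B R p p)"
  define m1 where "m1 = Re (B R q q)"
  define \<gamma> where "\<gamma> = B R p q"
  have pp: "B R p p = of_real m0" unfolding m0_def by (rule re_real, rule B_psd[OF psd c])
  have qq: "B R q q = of_real m1" unfolding m1_def by (rule re_real, rule B_psd[OF psd c])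
  have qp: "B R q p = cnj \<gamma>" unfolding \<gamma>_def by (rule B_herm[OF h c])
  have m: "m0 \<ge> 0" "m1 \<ge> 0" unfolding m0_def m1_def using B_psd[OF psd c] by auto
  have G: "cmod \<gamma>^2 \<le> m0 * m1" unfolding \<gamma>_def m0_def m1_def by (rule B_CS[OF psd h c])
  have w0: "cnj w0 * w0 = of_real (cmod w0^2)" by (metis complex_norm_square mult.commute)
  have w1: "cnj w1 * w1 = of_real (cmod w1^2)" by (metis complex_norm_square mult.commute)
  have "B R (\<lambda>i. w0 * p i + w1 * q i) (\<lambda>i. w0 * p i + w1 * q i)
     = of_real (m0 * cmod w0^2 + m1 * cmod w1^2) + (cnj w0 * w1 * \<gamma> + cnj (cnj w0 * w1 * \<gamma>))"
    unfolding B_lin pp qq qp \<gamma>_def[symmetric] using w0 w1 by (simp add: algebra_simps)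
  then have "Re (B R (\<lambda>i. w0 * p i + w1 * q i) (\<lambda>i. w0 * p i + w1 * q i))
     = m0 * cmod w0^2 + m1 * cmod w1^2 + 2 * Re (cnj w0 * w1 * \<gamma>)" by (simp only: re_aux)
  also have "\<dots> \<le> m0 * cmod w0^2 + m1 * cmod w1^2 + 2 * (cmod w0 * cmod w1 * cmod \<gamma>)"
    using complex_Re_le_cmod[of "cnj w0 * w1 * \<gamma>"] by (simp add: norm_mult)
  also have "\<dots> \<le> (m0+m1) * (cmod w0^2 + cmod w1^2)"
    by (rule real_2x2) (use m G in auto)
  finally show ?thesis unfolding m0_def m1_def .
qed

lemma final_real:
  fixes \<alpha> \<beta> G L c g :: real
  assumes "\<alpha> \<ge> 0" "\<beta> \<ge> 0" "G^2 \<le> \<alpha>*\<beta>" "\<alpha> \<le> L/2" "\<beta> \<le> (1-L)/2" "g \<le> G"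
    "c \<le> \<alpha> + \<beta> + 2*g" "1/2 \<le> c" "c \<le> 1"
  shows "(1 - 2 * sqrt (c * (1 - c))) / 2 \<le> L \<and> L \<le> (1 + 2 * sqrt (c * (1 - c))) / 2"
proof -
  have "\<alpha> + \<beta> \<le> 1/2" using assms(4,5) by (simp add: field_simps)
  then have g0: "2*g \<ge> c - 1/2" using assms by linarith
  have "(c - 1/2)^2 \<le> (2*g)^2" using g0 assms(8) by (intro power_mono) auto
  also have "\<dots> \<le> 4*G^2" using g0 assms(6,8) by (simp add: power2_eq_square mult_mono)
  also have "\<dots> \<le> 4*(\<alpha>*\<beta>)" using assms(3) by simp
  also have "\<dots> \<le> 4*((L/2)*((1-L)/2))" using assms(1,2,4,5) by (intro mult_left_mono mult_mono) auto
  finally have "(L - 1/2)^2 \<le> c*(1-c)" by (simp add: power2_eq_square algebra_simps)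
  then have "\<bar>L - 1/2\<bar> \<le> sqrt (c*(1-c))" using real_sqrt_le_mono real_sqrt_abs by metis
  then show ?thesis by (simp add: abs_le_iff field_simps)
qed


lemma sum2': "(\<Sum>i\<in>{0..<(2::nat)}. f i) = f 0 + f 1"
  by (simp add: numeral_eq_Suc atLeast0LessThan lessThan_Suc ac_simps)

lemma B_vec:
  assumes "v \<in> carrier_vec 4" "R \<in> carrier_mat 4 4"
  shows "conjugate v \<bullet> (R *\<^sub>v v) = B R (\<lambda>i. v$i) (\<lambda>i. v$i)"
  using assms unfolding B_def scalar_prod_def
  by (simp add: sum_distrib_left mult.assoc row_def scalar_prod_def atLeast0LessThan)

lemma B_cong:
  assumes "\<And>i. i<4 \<Longrightarrow> x i = x' i" "\<And>i. i<4 \<Longrightarrow> y i = y' i"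
  shows "B R x y = B R x' y'"
  unfolding B_def by (intro sum.cong refl) (use assms in auto)

lemma onb:
  assumes "orthonormal_basis2 e0 e1"
  shows "e0$0 * cnj (e0$0) + e0$1 * cnj (e0$1) = 1" "e1$0 * cnj (e1$0) + e1$1 * cnj (e1$1) = 1"
    "e0$0 * cnj (e1$0) + e0$1 * cnj (e1$1) = 0"
  using assms unfolding orthonormal_basis2_def scalar_prod_def
  by (auto simp: sum2')



lemma cns: "z * cnj z = complex_of_real (cmod z ^2)" by (metis complex_norm_square of_real_power)

theorem mainTheorem7:
  fixes \<rho> :: "complex mat" and \<Phi> :: "complex vec" and c :: real
  assumes "density_operator 4 \<rho>"
    and "max_entangled2 \<Phi>"
    and "1/2 \<le> c" and "c \<le> 1"
    and "Re (expect \<Phi> \<rho>) \<ge> c"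
  shows "\<forall>l. eigenvalue (ptrace_B \<rho>) l \<longrightarrow>
     l \<in> complex_of_real ` {(1 - 2 * sqrt (c * (1 - c))) / 2 .. (1 + 2 * sqrt (c * (1 - c))) / 2}"
proof (intro allI impI)
  fix l assume ev: "eigenvalue (ptrace_B \<rho>) l"
  have c\<rho>: "\<rho> \<in> carrier_mat 4 4" and h: "hermitian_mat \<rho>" and psd: "psd_mat \<rho>"
    and tr: "mat_trace \<rho> = 1" using assms(1) unfolding density_operator_def by auto
  have tr': "\<rho>$$(0,0) + \<rho>$$(1,1) + \<rho>$$(2,2) + \<rho>$$(3,3) = 1"
    using tr c\<rho> by (simp add: mat_trace_def sum4)
  obtain e0 e1 f0 f1 where oe: "orthonormal_basis2 e0 e1" and of: "orthonormal_basis2 f0 f1"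
    and \<Phi>: "\<Phi> = complex_of_real (1 / sqrt 2) \<cdot>\<^sub>v (tensor_vec2 e0 f0 + tensor_vec2 e1 f1)"
    using assms(2) unfolding max_entangled2_def by blast
  define k :: real where "k = 1 / sqrt 2"
  have kk: "k^2 = 1/2" unfolding k_def by (simp add: power_divide)
  have d\<Phi>: "\<Phi> \<in> carrier_vec 4" unfolding \<Phi> tensor_vec2_def by simp
  have \<Phi>i: "\<Phi>$0 = k*(e0$0*f0$0 + e1$0*f1$0)" "\<Phi>$1 = k*(e0$0*f0$1 + e1$0*f1$1)"
     "\<Phi>$2 = k*(e0$1*f0$0 + e1$1*f1$0)" "\<Phi>$3 = k*(e0$1*f0$1 + e1$1*f1$1)"
    unfolding \<Phi> tensor_vec2_def k_def by simp_all
  note E = onb[OF oe] and F = onb[OF of]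
  obtain v where v: "v \<in> carrier_vec 2" "v \<noteq> 0\<^sub>v 2" "ptrace_B \<rho> *\<^sub>v v = l \<cdot>\<^sub>v v"
    using ev unfolding eigenvalue_def eigenvector_def ptrace_B_def by auto
  define A00 where "A00 = \<rho>$$(0,0) + \<rho>$$(1,1)"
  define A01 where "A01 = \<rho>$$(0,2) + \<rho>$$(1,3)"
  define A10 where "A10 = \<rho>$$(2,0) + \<rho>$$(3,1)"
  define A11 where "A11 = \<rho>$$(2,2) + \<rho>$$(3,3)"
  have "(ptrace_B \<rho> *\<^sub>v v) $ 0 = (l \<cdot>\<^sub>v v) $ 0" using v(3) by simp
  then have E0: "A00 * v$0 + A01 * v$1 = l * v$0"
    using v(1) by (simp add: ptrace_B_def scalar_prod_def row_def sum2 sum2' A00_def A01_def)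
  have "(ptrace_B \<rho> *\<^sub>v v) $ 1 = (l \<cdot>\<^sub>v v) $ 1" using v(3) by simp
  then have E1: "A10 * v$0 + A11 * v$1 = l * v$1"
    using v(1) by (simp add: ptrace_B_def scalar_prod_def row_def sum2 sum2' A10_def A11_def)
  have vnz: "v$0 \<noteq> 0 \<or> v$1 \<noteq> 0"
  proof (rule ccontr)
    assume "\<not> ?thesis"
    then have "v = 0\<^sub>v 2" using v(1) by (intro eq_vecI) (auto simp: less_2_cases_iff)
    with v(2) show False by simp
  qed
  define nr where "nr = sqrt (cmod (v$0)^2 + cmod (v$1)^2)"
  have npos: "cmod (v$0)^2 + cmod (v$1)^2 > 0" using vnz by (auto simp: add_pos_nonneg add_nonneg_pos)
  then have nr0: "nr > 0" unfolding nr_def by simp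
  have nr2: "nr^2 = cmod (v$0)^2 + cmod (v$1)^2" unfolding nr_def using npos by simp
  define u0 where "u0 = v$0 / of_real nr"
  define u1 where "u1 = v$1 / of_real nr"
  have unit: "u0 * cnj u0 + u1 * cnj u1 = 1"
  proof -
    have "u0 * cnj u0 + u1 * cnj u1 = (v$0 * cnj (v$0) + v$1 * cnj (v$1)) / of_real (nr^2)"
      unfolding u0_def u1_def by (simp add: field_simps power2_eq_square add_divide_distrib)
    also have "\<dots> = of_real (cmod (v$0)^2 + cmod (v$1)^2) / of_real (nr^2)"
      using cns[of "v$0"] cns[of "v$1"] by simp
    also have "\<dots> = 1" unfolding nr2 by (rule divide_self) (metis npos of_real_eq_0_iff less_irrefl)
    finally show ?thesis .
  qed
  have E0': "A00 * u0 + A01 * u1 = l * u0"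
  proof -
    have "A00 * u0 + A01 * u1 = (A00 * v$0 + A01 * v$1) / of_real nr"
      unfolding u0_def u1_def by (simp add: add_divide_distrib)
    then show ?thesis using E0 unfolding u0_def by simp
  qed
  have E1': "A10 * u0 + A11 * u1 = l * u1"
  proof -
    have "A10 * u0 + A11 * u1 = (A10 * v$0 + A11 * v$1) / of_real nr"
      unfolding u0_def u1_def by (simp add: add_divide_distrib)
    then show ?thesis using E1 unfolding u1_def by simp
  qed
  define p0 where "p0 = (\<lambda>i::nat. if i = 0 then u0 else if i = 2 then u1 else 0)"
  define p1 where "p1 = (\<lambda>i::nat. if i = 1 then u0 else if i = 3 then u1 else 0)"
  define q0 where "q0 = (\<lambda>i::nat. if i = 0 then - cnj u1 else if i = 2 then cnj u0 else 0)"
  define q1 where "q1 = (\<lambda>i::nat. if i = 1 then - cnj u1 else if i = 3 then cnj u0 else 0)"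
  have lp: "B \<rho> p0 p0 + B \<rho> p1 p1 = l"
  proof -
    have "B \<rho> p0 p0 + B \<rho> p1 p1 = cnj u0 * (A00 * u0 + A01 * u1) + cnj u1 * (A10 * u0 + A11 * u1)"
      by (simp add: B_def sum4 p0_def p1_def A00_def A01_def A10_def A11_def algebra_simps)
    also have "\<dots> = l * (u0 * cnj u0 + u1 * cnj u1)" using E0' E1' by (simp add: algebra_simps)
    finally show ?thesis using unit by simp
  qed
  have lq: "B \<rho> q0 q0 + B \<rho> q1 q1 = 1 - l"
  proof -
    have "B \<rho> q0 q0 + B \<rho> q1 q1 + (B \<rho> p0 p0 + B \<rho> p1 p1) = (A00 + A11) * (u0 * cnj u0 + u1 * cnj u1)"
      by (simp add: B_def sum4 p0_def p1_def q0_def q1_def A00_def A01_def A10_def A11_def algebra_simps)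
    then show ?thesis using unit lp tr' unfolding A00_def A11_def by (simp add: algebra_simps)
  qed
  have psdR: "\<And>x. Im (B \<rho> x x) = 0" "\<And>x. Re (B \<rho> x x) \<ge> 0" using B_psd[OF psd c\<rho>] by auto
  define L where "L = Re l"
  have lreal: "l = of_real L"
  proof -
    have "Im l = 0" using arg_cong[OF lp, of Im] psdR by simp
    then show ?thesis unfolding L_def by (simp add: complex_eq_iff)
  qed
  have mp: "Re (B \<rho> p0 p0) + Re (B \<rho> p1 p1) = L" using arg_cong[OF lp, of Re] unfolding L_def by simp
  have mq: "Re (B \<rho> q0 q0) + Re (B \<rho> q1 q1) = 1 - L" using arg_cong[OF lq, of Re] unfolding L_def by simp
  define w0 where "w0 = cnj u0 * \<Phi>$0 + cnj u1 * \<Phi>$2"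
  define w1 where "w1 = cnj u0 * \<Phi>$1 + cnj u1 * \<Phi>$3"
  define v0 where "v0 = cnj (- cnj u1) * \<Phi>$0 + cnj (cnj u0) * \<Phi>$2"
  define v1 where "v1 = cnj (- cnj u1) * \<Phi>$1 + cnj (cnj u0) * \<Phi>$3"
  have wn: "w0 * cnj w0 + w1 * cnj w1 = 1/2"
    unfolding w0_def w1_def \<Phi>i by (rule ent[OF E F unit kk])
  have unit': "(- cnj u1) * cnj (- cnj u1) + cnj u0 * cnj (cnj u0) = 1"
    using unit by (simp add: algebra_simps)
  have vn: "v0 * cnj v0 + v1 * cnj v1 = 1/2"
    unfolding v0_def v1_def \<Phi>i by (rule ent[OF E F unit' kk])
  have wr: "cmod w0^2 + cmod w1^2 = 1/2"
  proof -
    have "complex_of_real (cmod w0^2 + cmod w1^2) = 1/2" using wn cns[of w0] cns[of w1] by simp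
    then show ?thesis by (metis of_real_eq_iff of_real_divide of_real_1 of_real_numeral)
  qed
  have vr: "cmod v0^2 + cmod v1^2 = 1/2"
  proof -
    have "complex_of_real (cmod v0^2 + cmod v1^2) = 1/2" using vn cns[of v0] cns[of v1] by simp
    then show ?thesis by (metis of_real_eq_iff of_real_divide of_real_1 of_real_numeral)
  qed
  define a where "a = (\<lambda>i. w0 * p0 i + w1 * p1 i)"
  define b where "b = (\<lambda>i. v0 * q0 i + v1 * q1 i)"
  have dec: "\<And>i. i < 4 \<Longrightarrow> \<Phi>$i = 1 * a i + 1 * b i"
  proof -
    fix i :: nat assume "i < 4"
    then have "i = 0 \<or> i = 1 \<or> i = 2 \<or> i = 3" by auto
    moreover have "\<Phi>$0 = \<Phi>$0 * (u0 * cnj u0 + u1 * cnj u1)" "\<Phi>$1 = \<Phi>$1 * (u0 * cnj u0 + u1 * cnj u1)"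
      "\<Phi>$2 = \<Phi>$2 * (u0 * cnj u0 + u1 * cnj u1)" "\<Phi>$3 = \<Phi>$3 * (u0 * cnj u0 + u1 * cnj u1)"
      using unit by simp_all
    ultimately show "\<Phi>$i = 1 * a i + 1 * b i"
      unfolding a_def b_def w0_def w1_def v0_def v1_def p0_def p1_def q0_def q1_def
      by (auto simp: algebra_simps)
  qed
  have exp: "expect \<Phi> \<rho> = B \<rho> a a + B \<rho> a b + B \<rho> b a + B \<rho> b b"
  proof -
    have "expect \<Phi> \<rho> = B \<rho> (\<lambda>i. \<Phi>$i) (\<lambda>i. \<Phi>$i)" unfolding expect_def by (rule B_vec[OF d\<Phi> c\<rho>])
    also have "\<dots> = B \<rho> (\<lambda>i. 1 * a i + 1 * b i) (\<lambda>i. 1 * a i + 1 * b i)" by (rule B_cong) (use dec in auto)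
    also have "\<dots> = B \<rho> a a + B \<rho> a b + B \<rho> b a + B \<rho> b b" unfolding B_lin by simp
    finally show ?thesis .
  qed
  have ba: "B \<rho> b a = cnj (B \<rho> a b)" by (rule B_herm[OF h c\<rho>])
  have reexp: "Re (expect \<Phi> \<rho>) = Re (B \<rho> a a) + Re (B \<rho> b b) + 2 * Re (B \<rho> a b)"
    unfolding exp ba by simp
  have \<alpha>: "Re (B \<rho> a a) \<le> L/2"
    using B_2x2[OF psd h c\<rho>, of w0 p0 w1 p1] unfolding a_def[symmetric] mp wr by simp
  have \<beta>: "Re (B \<rho> b b) \<le> (1-L)/2"
    using B_2x2[OF psd h c\<rho>, of v0 q0 v1 q1] unfolding b_def[symmetric] mq vr by simp
  have "(1 - 2 * sqrt (c * (1 - c))) / 2 \<le> L \<and> L \<le> (1 + 2 * sqrt (c * (1 - c))) / 2"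
  proof (rule final_real[of "Re (B \<rho> a a)" "Re (B \<rho> b b)" "cmod (B \<rho> a b)"])
    show "Re (B \<rho> a a) \<ge> 0" "Re (B \<rho> b b) \<ge> 0" using psdR by auto
    show "cmod (B \<rho> a b)^2 \<le> Re (B \<rho> a a) * Re (B \<rho> b b)" by (rule B_CS[OF psd h c\<rho>])
    show "Re (B \<rho> a b) \<le> cmod (B \<rho> a b)" by (rule complex_Re_le_cmod)
    show "c \<le> Re (B \<rho> a a) + Re (B \<rho> b b) + 2 * Re (B \<rho> a b)" using assms(5) reexp by simp
  qed (use \<alpha> \<beta> assms(3,4) in auto)
  then show "l \<in> complex_of_real ` {(1 - 2 * sqrt (c * (1 - c))) / 2 .. (1 + 2 * sqrt (c * (1 - c))) / 2}"
    unfolding lreal by auto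
qed


end
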